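(* Let $\mathcal{F}=\{f_1,\dots,f_M\}$ be a frame of $\mathbb{R}^N$ partitioned into $K$ disjoint pools indexed by $I_1,\dots,I_K$ (disjoint, union $\{1,\dots,M\}$), each of size $|I_k|=L$. Let $P_\infty(x)=\big(\max_{j\in I_k}|\langle x,f_j\rangle|\big)_{k=1}^K$ be the max-pooling operator. Then for all $x,x'\in\mathbb{R}^N$, $$d(x,x')\Big(\min_{s,s'\in\mathcal{S}}A(s,s')\Big)\le\|P_\infty(x)-P_\infty(x')\|_2,$$ where $d(x,x')=\min(\|x-x'\|,\|x+x'\|)$ and, for $s,s'\in\mathcal{S}$ with $\mathcal{J}=\mathcal{J}(s,s')$, $$A(s,s')=\Big\{\min_{\Omega\subseteq\mathcal{J}}\big(\lambda_-^2(\mathcal{F}_{s,\Omega})+\lambda_-^2(\mathcal{F}_{s,\mathcal{J}\setminus\Omega})\big)+\frac{1}{4L}\min_{\Omega\subseteq\mathcal{J}^c}\big(\Lambda_{s,s',\Omega}^2+\Lambda_{s,s',\mathcal{J}^c\setminus\Omega}^2\big)\Big\}^{1/2}.$$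
   Context: Frame bounds: for a finite family $G=\{g_i\}\subset\mathbb{R}^N$, $\lambda_-(G)=\inf_{\|x\|=1}(\sum_i\langle x,g_i\rangle^2)^{1/2}$, $\lambda_+(G)=\sup_{\|x\|=1}(\sum_i\langle x,g_i\rangle^2)^{1/2}$, with $\lambda_-(\emptyset)=0$. Switches: for $x\in\mathbb{R}^N$, $s(x)\in\prod_k I_k$ is given by $s(x)_k=\arg\max_{j\in I_k}|\langle x,f_j\rangle|$, and $\mathcal{S}=\{s(x):x\in\mathbb{R}^N\}$. For $s\in\mathcal{S}$, the cone $\mathcal{C}_s=\bigcap_{k\le K}\bigcap_{j\in I_k}\{x:|\langle x,f_{s_k}\rangle|\ge|\langle x,f_j\rangle|\}$. For $s\in\mathcal{S}$ and $\Omega\subseteq\{1,\dots,K\}$, $\mathcal{F}_{s,\Omega}=(f_{s_k})_{k\in\Omega}$ and $\mathcal{F}_s|_\Omega$ is the linear map $x\mapsto(\langle x,f_{s_k}\rangle)_{k\in\Omega}\in\mathbb{R}^{|\Omega|}$; $\mathcal{F}|_\Omega$ denotes the family $\{f_j: j\in\bigcup_{k\in\Omega}I_k\}$ of all vectors in the pools indexed by $\Omega$. For nonzero vectors $u,v$, $\theta(u,v)=\arccos\big(|\langle u,v\rangle|/(\|u\|\|v\|)\big)$. For $s,s'\in\mathcal{S}$ and $\Omega\subseteq\{1,\dots,K\}$, $\beta(s,s',\Omega)=\min\{\theta(u,v): u\in\mathcal{F}_s|_\Omega(\mathcal{C}_s),\ v\in\mathcal{F}_{s'}|_\Omega(\mathcal{C}_{s'})\}$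 (a modified first principal angle restricted to the images of the cones), and $\Lambda_{s,s',\Omega}=\lambda_-(\mathcal{F}|_\Omega)\sin(\beta(s,s',\Omega))$. Finally $\mathcal{J}(s,s')=\{k: s_k=s'_k\}$ and $\mathcal{J}^c=\{1,\dots,K\}\setminus\mathcal{J}$. *)

theory Defs
  imports "HOL-Analysis.Analysis"
begin

definition lambda_minus :: "('i \<Rightarrow> 'a::euclidean_space) \<Rightarrow> 'i set \<Rightarrow> real" where
  "lambda_minus g A = (INF x\<in>{x::'a. norm x = 1}. sqrt (\<Sum>i\<in>A. (x \<bullet> g i)^2))"

definition Pinf :: "(nat \<Rightarrow> 'a::euclidean_space) \<Rightarrow> (nat \<Rightarrow> nat set) \<Rightarrow> 'a \<Rightarrow> nat \<Rightarrow> real" where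
  "Pinf f I x k = Max ((\<lambda>j. \<bar>x \<bullet> f j\<bar>) ` I k)"

definition pool_dist :: "(nat \<Rightarrow> 'a::euclidean_space) \<Rightarrow> (nat \<Rightarrow> nat set) \<Rightarrow> nat \<Rightarrow> 'a \<Rightarrow> 'a \<Rightarrow> real" where
  "pool_dist f I K x x' = sqrt (\<Sum>k\<in>{1..K}. (Pinf f I x k - Pinf f I x' k)^2)"

definition dpm :: "'a::real_normed_vector \<Rightarrow> 'a \<Rightarrow> real" where
  "dpm x x' = min (norm (x - x')) (norm (x + x'))"

definition cone_s :: "(nat \<Rightarrow> 'a::euclidean_space) \<Rightarrow> (nat \<Rightarrow> nat set) \<Rightarrow> nat \<Rightarrow> (nat \<Rightarrow> nat) \<Rightarrow> 'a set" where
  "cone_s f I K s = {x. \<forall>k\<in>{1..K}. \<forall>j\<in>I k. \<bar>x \<bullet> f j\<bar> \<le> \<bar>x \<bullet> f (s k)\<bar>}"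

text \<open>The map F_s restricted to Omega, x |-> (<x, f_{s_k}>)_{k in Omega}; vectors of
  R^|Omega| are represented as functions on Omega (values off Omega are irrelevant).\<close>
definition Fs_map :: "(nat \<Rightarrow> 'a::euclidean_space) \<Rightarrow> (nat \<Rightarrow> nat) \<Rightarrow> 'a \<Rightarrow> nat \<Rightarrow> real" where
  "Fs_map f s x = (\<lambda>k. x \<bullet> f (s k))"

definition inner_on :: "nat set \<Rightarrow> (nat \<Rightarrow> real) \<Rightarrow> (nat \<Rightarrow> real) \<Rightarrow> real" where
  "inner_on \<Omega> u v = (\<Sum>k\<in>\<Omega>. u k * v k)"

definition norm_on :: "nat set \<Rightarrow> (nat \<Rightarrow> real) \<Rightarrow> real" where
  "norm_on \<Omega> u = sqrt (inner_on \<Omega> u u)"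

definition theta_on :: "nat set \<Rightarrow> (nat \<Rightarrow> real) \<Rightarrow> (nat \<Rightarrow> real) \<Rightarrow> real" where
  "theta_on \<Omega> u v = arccos (\<bar>inner_on \<Omega> u v\<bar> / (norm_on \<Omega> u * norm_on \<Omega> v))"

text \<open>Modified first principal angle beta(s,s',Omega): min over nonzero u in F_s|Omega(C_s),
  nonzero v in F_s'|Omega(C_s'). Convention: 0 if there is no such pair (degenerate case).\<close>
definition beta_angle :: "(nat \<Rightarrow> 'a::euclidean_space) \<Rightarrow> (nat \<Rightarrow> nat set) \<Rightarrow> nat \<Rightarrow>
    (nat \<Rightarrow> nat) \<Rightarrow> (nat \<Rightarrow> nat) \<Rightarrow> nat set \<Rightarrow> real" where
  "beta_angle f I K s s' \<Omega> =
     (let T = {theta_on \<Omega> u v | u v.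
                 u \<in> Fs_map f s ` cone_s f I K s \<and> v \<in> Fs_map f s' ` cone_s f I K s' \<and>
                 norm_on \<Omega> u \<noteq> 0 \<and> norm_on \<Omega> v \<noteq> 0}
      in if T = {} then 0 else Inf T)"

definition Lambda_ss :: "(nat \<Rightarrow> 'a::euclidean_space) \<Rightarrow> (nat \<Rightarrow> nat set) \<Rightarrow> nat \<Rightarrow>
    (nat \<Rightarrow> nat) \<Rightarrow> (nat \<Rightarrow> nat) \<Rightarrow> nat set \<Rightarrow> real" where
  "Lambda_ss f I K s s' \<Omega> = lambda_minus f (\<Union>k\<in>\<Omega>. I k) * sin (beta_angle f I K s s' \<Omega>)"

definition Jset :: "nat \<Rightarrow> (nat \<Rightarrow> nat) \<Rightarrow> (nat \<Rightarrow> nat) \<Rightarrow> nat set" where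
  "Jset K s s' = {k\<in>{1..K}. s k = s' k}"

definition Jcset :: "nat \<Rightarrow> (nat \<Rightarrow> nat) \<Rightarrow> (nat \<Rightarrow> nat) \<Rightarrow> nat set" where
  "Jcset K s s' = {1..K} - Jset K s s'"

definition A_bound :: "(nat \<Rightarrow> 'a::euclidean_space) \<Rightarrow> (nat \<Rightarrow> nat set) \<Rightarrow> nat \<Rightarrow> nat \<Rightarrow>
    (nat \<Rightarrow> nat) \<Rightarrow> (nat \<Rightarrow> nat) \<Rightarrow> real" where
  "A_bound f I K L s s' =
     (let J = Jset K s s'; Jc = Jcset K s s' in
      sqrt (Min ((\<lambda>\<Omega>. (lambda_minus (\<lambda>k. f (s k)) \<Omega>)^2
                        + (lambda_minus (\<lambda>k. f (s k)) (J - \<Omega>))^2) ` Pow J)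
            + 1 / (4 * real L) *
              Min ((\<lambda>\<Omega>. (Lambda_ss f I K s s' \<Omega>)^2 + (Lambda_ss f I K s s' (Jc - \<Omega>))^2) ` Pow Jc)))"

end

theory Submission
  imports Defs
begin


lemma unit_sphere_ne: "{x::'a::euclidean_space. norm x = 1} \<noteq> {}"
proof -
  obtain b :: 'a where "b \<in> Basis" using nonempty_Basis by blast
  then show ?thesis by (auto intro!: exI[of _ b])
qed

lemma lambda_minus_nonneg: "0 \<le> lambda_minus (g::'i \<Rightarrow> 'a::euclidean_space) A"
  unfolding lambda_minus_def
  by (rule cINF_greatest[OF unit_sphere_ne]) (simp add: sum_nonneg)

lemma lambda_minus_bound:
  fixes g :: "'i \<Rightarrow> 'a::euclidean_space"
  shows "(lambda_minus g A)^2 * (norm y)^2 \<le> (\<Sum>i\<in>A. (y \<bullet> g i)^2)"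
proof (cases "y = 0")
  case True then show ?thesis by (simp add: sum_nonneg)
next
  case False
  define z where "z = y /\<^sub>R norm y"
  have nz: "norm z = 1" using False by (simp add: z_def)
  have "lambda_minus g A \<le> sqrt (\<Sum>i\<in>A. (z \<bullet> g i)^2)"
    unfolding lambda_minus_def
    by (rule cINF_lower) (auto simp: nz bdd_below_def sum_nonneg intro!: exI[of _ 0])
  also have "(\<Sum>i\<in>A. (z \<bullet> g i)^2) = (\<Sum>i\<in>A. (y \<bullet> g i)^2) / (norm y)^2"
    by (simp add: z_def sum_divide_distrib power_mult_distrib field_simps)
  finally have "lambda_minus g A \<le> sqrt (\<Sum>i\<in>A. (y \<bullet> g i)^2) / norm y"
    by (simp add: real_sqrt_divide)
  then have "(lambda_minus g A)^2 \<le> (sqrt (\<Sum>i\<in>A. (y \<bullet> g i)^2) / norm y)^2"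
    using lambda_minus_nonneg by (intro power_mono) auto
  also have "\<dots> = (\<Sum>i\<in>A. (y \<bullet> g i)^2) / (norm y)^2"
    by (simp add: power_divide sum_nonneg)
  finally show ?thesis using False by (simp add: field_simps)
qed

lemma sq_abs_diff: "(\<bar>a\<bar> - \<bar>b\<bar>)^2 = min ((a - b)^2) ((a + b)^2)" for a b :: real
  by (cases "a \<ge> 0"; cases "b \<ge> 0") (auto simp: min_def power2_eq_square algebra_simps mult_nonneg_nonpos mult_nonpos_nonneg zero_le_mult_iff)

lemma theta_props:
  assumes "norm_on \<Omega> u \<noteq> 0" "norm_on \<Omega> v \<noteq> 0"
  shows "0 \<le> theta_on \<Omega> u v" "theta_on \<Omega> u v \<le> pi/2"
    "(sin (theta_on \<Omega> u v))^2 = 1 - (inner_on \<Omega> u v)^2 / (inner_on \<Omega> u u * inner_on \<Omega> v v)"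
proof -
  let ?p = "inner_on \<Omega> u v" and ?a = "inner_on \<Omega> u u" and ?b = "inner_on \<Omega> v v"
  have a0: "?a \<ge> 0" "?b \<ge> 0" by (auto simp: inner_on_def sum_nonneg)
  have a1: "?a > 0" "?b > 0" using assms a0 by (auto simp: norm_on_def)
  have cs: "?p^2 \<le> ?a * ?b" unfolding inner_on_def
    using Cauchy_Schwarz_ineq_sum[of u v \<Omega>] by (simp add: power2_eq_square)
  define c where "c = \<bar>?p\<bar> / (sqrt ?a * sqrt ?b)"
  have c2: "c^2 = ?p^2 / (?a * ?b)" using a0
    by (simp add: c_def power_divide power_mult_distrib)
  have c0: "0 \<le> c" using a0 by (simp add: c_def)
  have c1: "c \<le> 1"
  proof -
    have "c^2 \<le> 1" using c2 cs a1 by simp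
    then show ?thesis using c0 by (simp add: power_le_one_iff)
  qed
  have th: "theta_on \<Omega> u v = arccos c" by (simp add: theta_on_def norm_on_def c_def)
  show "0 \<le> theta_on \<Omega> u v" using c0 c1 by (simp add: th arccos_lbound)
  show "theta_on \<Omega> u v \<le> pi/2" using c0 c1 arccos_le_pi2[of c] by (simp add: th)
  show "(sin (theta_on \<Omega> u v))^2 = 1 - ?p^2 / (?a * ?b)"
    using c0 c1 c2 cs a1 by (simp add: th sin_arccos)
qed



lemma sum_sq_diff: "(\<Sum>k\<in>\<Omega>. (u k - v k)^2) = inner_on \<Omega> u u + inner_on \<Omega> v v - 2 * inner_on \<Omega> u v"
  proof -
  have "(\<Sum>k\<in>\<Omega>. (u k - v k)^2) = (\<Sum>k\<in>\<Omega>. u k * u k + v k * v k - 2 * (u k * v k))"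
    by (rule sum.cong) (auto simp: power2_eq_square algebra_simps)
  then show ?thesis by (simp add: inner_on_def sum.distrib sum_subtractf sum_distrib_left)
qed

lemma alg_aux:
  fixes a b p :: real
  assumes "a > 0" "b > 0"
  shows "(1 - p^2 / (a * b)) * max a b \<le> a + b - 2 * p"
proof (cases "a \<ge> b")
  case True
  have "(1 - p^2 / (a * b)) * max a b = a - p^2 / b" using True assms by (simp add: field_simps)
  also have "\<dots> \<le> a + b - 2 * p"
  proof -
    have "0 \<le> (b - p)^2 / b" using assms by simp
    also have "(b - p)^2 / b = b - 2 * p + p^2 / b" using assms by (simp add: field_simps power2_eq_square)
    finally show ?thesis by simp
  qed
  finally show ?thesis .
next
  case False
  have "(1 - p^2 / (a * b)) * max a b = b - p^2 / a" using False assms by (simp add: field_simps)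
  also have "\<dots> \<le> a + b - 2 * p"
  proof -
    have "0 \<le> (a - p)^2 / a" using assms by simp
    also have "(a - p)^2 / a = a - 2 * p + p^2 / a" using assms by (simp add: field_simps power2_eq_square)
    finally show ?thesis by simp
  qed
  finally show ?thesis .
qed

lemma sin_sq_le1: "(sin (x::real))^2 \<le> 1" using sin_cos_squared_add[of x] by (smt (verit) zero_le_power2)

lemma angle_bound:
  assumes u: "u \<in> Fs_map f s ` cone_s f I K s" and v: "v \<in> Fs_map f s' ` cone_s f I K s'"
  shows "(sin (beta_angle f I K s s' \<Omega>))^2 * max (\<Sum>k\<in>\<Omega>. (u k)^2) (\<Sum>k\<in>\<Omega>. (v k)^2)
     \<le> (\<Sum>k\<in>\<Omega>. (u k - v k)^2)"
proof -
  let ?p = "inner_on \<Omega> u v" and ?a = "inner_on \<Omega> u u" and ?b = "inner_on \<Omega> v v"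
  let ?B = "beta_angle f I K s s' \<Omega>"
  have ea: "(\<Sum>k\<in>\<Omega>. (u k)^2) = ?a" "(\<Sum>k\<in>\<Omega>. (v k)^2) = ?b"
    by (simp_all add: inner_on_def power2_eq_square)
  have a0: "?a \<ge> 0" "?b \<ge> 0" by (auto simp: inner_on_def sum_nonneg)
  have s1: "(sin ?B)^2 \<le> 1" by (rule sin_sq_le1)
  show ?thesis
  proof (cases "?a = 0 \<or> ?b = 0")
    case True
    have cs: "?p^2 \<le> ?a * ?b" unfolding inner_on_def
      using Cauchy_Schwarz_ineq_sum[of u v \<Omega>] by (simp add: power2_eq_square)
    then have p0: "?p = 0" using True by auto
    have "(sin ?B)^2 * max ?a ?b \<le> 1 * max ?a ?b"
      using s1 a0 by (intro mult_right_mono) auto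
    also have "\<dots> \<le> ?a + ?b - 2 * ?p" using True a0 p0 by auto
    finally show ?thesis by (simp add: ea sum_sq_diff)
  next
    case False
    then have a1: "?a > 0" "?b > 0" using a0 by auto
    have nz: "norm_on \<Omega> u \<noteq> 0" "norm_on \<Omega> v \<noteq> 0" using a1 by (auto simp: norm_on_def)
    define T where "T = {theta_on \<Omega> u v | u v.
                 u \<in> Fs_map f s ` cone_s f I K s \<and> v \<in> Fs_map f s' ` cone_s f I K s' \<and>
                 norm_on \<Omega> u \<noteq> 0 \<and> norm_on \<Omega> v \<noteq> 0}"
    have thT: "theta_on \<Omega> u v \<in> T" unfolding T_def using u v nz by blast
    have Tne: "T \<noteq> {}" using thT by blast
    have T0: "\<And>t. t \<in> T \<Longrightarrow> 0 \<le> t" unfolding T_def using theta_props(1) by blast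
    have B: "?B = Inf T" unfolding beta_angle_def T_def[symmetric] using Tne by (simp add: Let_def)
    have bdd: "bdd_below T" using T0 by (auto simp: bdd_below_def)
    have B1: "?B \<le> theta_on \<Omega> u v" using B cInf_lower[OF thT bdd] by simp
    have B0: "0 \<le> ?B" using B cInf_greatest[OF Tne T0] by simp
    have th2: "theta_on \<Omega> u v \<le> pi/2" using theta_props(2)[OF nz] .
    have "sin ?B \<le> sin (theta_on \<Omega> u v)"
      using B0 B1 th2 by (subst sin_mono_le_eq) auto
    moreover have "0 \<le> sin ?B" using B0 B1 th2 by (intro sin_ge_zero) auto
    ultimately have "(sin ?B)^2 \<le> (sin (theta_on \<Omega> u v))^2" by (intro power_mono) auto
    also have "\<dots> = 1 - ?p^2 / (?a * ?b)" using theta_props(3)[OF nz] .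
    finally have "(sin ?B)^2 * max ?a ?b \<le> (1 - ?p^2 / (?a * ?b)) * max ?a ?b"
      using a0 by (intro mult_right_mono) auto
    also have "\<dots> \<le> ?a + ?b - 2 * ?p" using alg_aux a1 by blast
    finally show ?thesis by (simp add: ea sum_sq_diff)
  qed
qed



lemma pool_energy:
  fixes f :: "nat \<Rightarrow> 'a::euclidean_space"
  assumes disj: "\<And>k k'. k \<in> {1..K} \<Longrightarrow> k' \<in> {1..K} \<Longrightarrow> k \<noteq> k' \<Longrightarrow> I k \<inter> I k' = {}"
    and fin: "\<And>k. k \<in> {1..K} \<Longrightarrow> finite (I k)"
    and size: "\<And>k. k \<in> {1..K} \<Longrightarrow> card (I k) = L"
    and \<Omega>: "\<Omega> \<subseteq> {1..K}" and x: "x \<in> cone_s f I K s"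
  shows "(lambda_minus f (\<Union>k\<in>\<Omega>. I k))^2 * (norm x)^2 \<le> real L * (\<Sum>k\<in>\<Omega>. (x \<bullet> f (s k))^2)"
proof -
  have finO: "finite \<Omega>" using \<Omega> finite_subset by blast
  have "(lambda_minus f (\<Union>k\<in>\<Omega>. I k))^2 * (norm x)^2 \<le> (\<Sum>j\<in>(\<Union>k\<in>\<Omega>. I k). (x \<bullet> f j)^2)"
    by (rule lambda_minus_bound)
  also have "\<dots> = (\<Sum>k\<in>\<Omega>. \<Sum>j\<in>I k. (x \<bullet> f j)^2)"
    proof (rule sum.UNION_disjoint[OF finO])
    show "\<forall>k\<in>\<Omega>. finite (I k)" using \<Omega> fin by blast
    show "\<forall>i\<in>\<Omega>. \<forall>j\<in>\<Omega>. i \<noteq> j \<longrightarrow> I i \<inter> I j = {}" using \<Omega> disj by (meson subsetD)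
  qed
  also have "\<dots> \<le> (\<Sum>k\<in>\<Omega>. real L * (x \<bullet> f (s k))^2)"
  proof (rule sum_mono)
    fix k assume k: "k \<in> \<Omega>"
    then have kK: "k \<in> {1..K}" using \<Omega> by auto
    have "(\<Sum>j\<in>I k. (x \<bullet> f j)^2) \<le> of_nat (card (I k)) * (x \<bullet> f (s k))^2"
    proof (rule sum_bounded_above)
      fix j assume "j \<in> I k"
      then have "\<bar>x \<bullet> f j\<bar> \<le> \<bar>x \<bullet> f (s k)\<bar>" using x kK by (auto simp: cone_s_def)
      then show "(x \<bullet> f j)^2 \<le> (x \<bullet> f (s k))^2" by (simp add: abs_le_square_iff)
    qed
    then show "(\<Sum>j\<in>I k. (x \<bullet> f j)^2) \<le> real L * (x \<bullet> f (s k))^2" using size kK by simp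
  qed
  also have "\<dots> = real L * (\<Sum>k\<in>\<Omega>. (x \<bullet> f (s k))^2)" by (simp add: sum_distrib_left)
  finally show ?thesis .
qed

lemma cone_neg: "y \<in> cone_s f I K s \<Longrightarrow> -y \<in> cone_s f I K s"
  by (simp add: cone_s_def)

lemma dpm_neg: "dpm x (-y) = dpm x y"
  by (simp add: dpm_def min.commute)

lemma dpm_nonneg: "0 \<le> dpm x y" by (simp add: dpm_def)

lemma dpm_le: "dpm x y \<le> norm (x - y)" "dpm x y \<le> norm (x + y)" by (simp_all add: dpm_def)

lemma j_bound:
  fixes g :: "nat \<Rightarrow> 'a::euclidean_space"
  shows "(lambda_minus g \<Omega>)^2 * (dpm x y)^2 \<le> (\<Sum>k\<in>\<Omega>. (x \<bullet> g k - y \<bullet> g k)^2)"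
proof -
  have "(dpm x y)^2 \<le> (norm (x - y))^2" using dpm_le(1) dpm_nonneg by (intro power_mono) auto
  then have "(lambda_minus g \<Omega>)^2 * (dpm x y)^2 \<le> (lambda_minus g \<Omega>)^2 * (norm (x - y))^2"
    by (intro mult_left_mono) auto
  also have "\<dots> \<le> (\<Sum>k\<in>\<Omega>. ((x - y) \<bullet> g k)^2)" by (rule lambda_minus_bound)
  finally show ?thesis by (simp add: inner_diff_left)
qed

lemma jc_bound:
  fixes f :: "nat \<Rightarrow> 'a::euclidean_space"
  assumes disj: "\<And>k k'. k \<in> {1..K} \<Longrightarrow> k' \<in> {1..K} \<Longrightarrow> k \<noteq> k' \<Longrightarrow> I k \<inter> I k' = {}"
    and fin: "\<And>k. k \<in> {1..K} \<Longrightarrow> finite (I k)"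
    and size: "\<And>k. k \<in> {1..K} \<Longrightarrow> card (I k) = L"
    and \<Omega>: "\<Omega> \<subseteq> {1..K}" and x: "x \<in> cone_s f I K s" and y: "y \<in> cone_s f I K s'"
  shows "1 / (4 * real L) * (Lambda_ss f I K s s' \<Omega>)^2 * (dpm x y)^2
         \<le> (\<Sum>k\<in>\<Omega>. (x \<bullet> f (s k) - y \<bullet> f (s' k))^2)"
proof (cases "L = 0")
  case True then show ?thesis by (simp add: sum_nonneg)
next
  case False
  then have L0: "real L > 0" by simp
  define lam where "lam = lambda_minus f (\<Union>k\<in>\<Omega>. I k)"
  define sg where "sg = (sin (beta_angle f I K s s' \<Omega>))^2"
  define A where "A = (\<Sum>k\<in>\<Omega>. (x \<bullet> f (s k))^2)"
  define B where "B = (\<Sum>k\<in>\<Omega>. (y \<bullet> f (s' k))^2)"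
  have sg0: "0 \<le> sg" by (simp add: sg_def)
  have ab: "sg * max A B \<le> (\<Sum>k\<in>\<Omega>. (x \<bullet> f (s k) - y \<bullet> f (s' k))^2)"
    using angle_bound[of "Fs_map f s x" f s I K "Fs_map f s' y" s' \<Omega>] x y
    by (simp add: Fs_map_def sg_def A_def B_def)
  have eA: "lam^2 * (norm x)^2 \<le> real L * A"
    unfolding lam_def A_def by (rule pool_energy[OF disj fin size \<Omega> x])
  have eB: "lam^2 * (norm y)^2 \<le> real L * B"
    unfolding lam_def B_def by (rule pool_energy[OF disj fin size \<Omega> y])
  define m where "m = max (norm x) (norm y)"
  have "dpm x y \<le> 2 * m"
    using dpm_le(1)[of x y] norm_triangle_ineq4[of x y] unfolding m_def by linarith
  then have d4: "(dpm x y)^2 \<le> 4 * m^2"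
    using dpm_nonneg[of x y] power_mono[of "dpm x y" "2*m" 2] by (simp add: power_mult_distrib)
  have lm: "lam^2 * m^2 \<le> real L * max A B"
  proof (cases "norm x \<le> norm y")
    case True
    then have "m = norm y" by (simp add: m_def)
    then show ?thesis using eB L0 by (smt (verit) max.cobounded2 mult_left_mono)
  next
    case False
    then have "m = norm x" by (simp add: m_def)
    then show ?thesis using eA L0 by (smt (verit) max.cobounded1 mult_left_mono)
  qed
  have "1 / (4 * real L) * (Lambda_ss f I K s s' \<Omega>)^2 * (dpm x y)^2
        = sg * (lam^2 * (dpm x y)^2) / (4 * real L)"
    by (simp add: Lambda_ss_def lam_def sg_def power_mult_distrib)
  also have "\<dots> \<le> sg * (lam^2 * (4 * m^2)) / (4 * real L)"
    using d4 sg0 L0 by (intro divide_right_mono mult_left_mono) auto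
  also have "\<dots> = sg * (lam^2 * m^2) / real L" using L0 by simp
  also have "\<dots> \<le> sg * (real L * max A B) / real L"
    using lm sg0 L0 by (intro divide_right_mono mult_left_mono) auto
  also have "\<dots> = sg * max A B" using L0 by simp
  also have "\<dots> \<le> (\<Sum>k\<in>\<Omega>. (x \<bullet> f (s k) - y \<bullet> f (s' k))^2)" by (rule ab)
  finally show ?thesis .
qed



theorem proposition4:
  fixes f :: "nat \<Rightarrow> 'a::euclidean_space"
    and I :: "nat \<Rightarrow> nat set"
    and M K L :: nat
    and sw :: "'a \<Rightarrow> nat \<Rightarrow> nat"
  assumes frame: "span (f ` {1..M}) = UNIV"
    and disj: "\<And>k k'. k \<in> {1..K} \<Longrightarrow> k' \<in> {1..K} \<Longrightarrow> k \<noteq> k' \<Longrightarrow> I k \<inter> I k' = {}"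
    and cover: "(\<Union>k\<in>{1..K}. I k) = {1..M}"
    and size: "\<And>k. k \<in> {1..K} \<Longrightarrow> card (I k) = L"
    and sw_in: "\<And>x k. k \<in> {1..K} \<Longrightarrow> sw x k \<in> I k"
    and sw_max: "\<And>x k j. k \<in> {1..K} \<Longrightarrow> j \<in> I k \<Longrightarrow> \<bar>x \<bullet> f j\<bar> \<le> \<bar>x \<bullet> f (sw x k)\<bar>"
  shows "\<forall>x x'. dpm x x' * (INF s\<in>range sw. INF s'\<in>range sw. A_bound f I K L s s')
                \<le> pool_dist f I K x x'"
proof (intro allI)
  fix x x' :: 'a
  have fin: "\<And>k. k \<in> {1..K} \<Longrightarrow> finite (I k)"
  proof -
    fix k assume "k \<in> {1..K}"
    then have "I k \<subseteq> {1..M}" using cover by blast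
    then show "finite (I k)" using finite_subset by blast
  qed
  have A0: "\<And>s s'. 0 \<le> A_bound f I K L s s'"
    unfolding A_bound_def Let_def
    by (intro real_sqrt_ge_zero add_nonneg_nonneg mult_nonneg_nonneg Min.boundedI) (auto simp: Jset_def Jcset_def)
  define s where "s = sw x"
  define s' where "s' = sw x'"
  have xc: "x \<in> cone_s f I K s" using sw_max by (auto simp: cone_s_def s_def)
  have yc: "x' \<in> cone_s f I K s'" using sw_max by (auto simp: cone_s_def s'_def)
  define a where "a k = x \<bullet> f (s k)" for k
  define b where "b k = x' \<bullet> f (s' k)" for k
  define d where "d = dpm x x'"
  have d0: "0 \<le> d" by (simp add: d_def dpm_nonneg)
  have P1: "Pinf f I x k = \<bar>a k\<bar>" if "k \<in> {1..K}" for k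
    unfolding Pinf_def a_def s_def
    by (rule Max_eqI) (use that fin sw_in sw_max in auto)
  have P2: "Pinf f I x' k = \<bar>b k\<bar>" if "k \<in> {1..K}" for k
    unfolding Pinf_def b_def s'_def
    by (rule Max_eqI) (use that fin sw_in sw_max in auto)
  define mm where "mm k = min ((a k - b k)^2) ((a k + b k)^2)" for k
  define S where "S = (\<Sum>k\<in>{1..K}. (Pinf f I x k - Pinf f I x' k)^2)"
  have S: "S = (\<Sum>k\<in>{1..K}. mm k)"
    unfolding S_def mm_def by (rule sum.cong) (auto simp: P1 P2 sq_abs_diff)
  define J where "J = Jset K s s'"
  define Jc where "Jc = Jcset K s s'"
  have JK: "J \<subseteq> {1..K}" by (auto simp: J_def Jset_def)
  have JcK: "Jc \<subseteq> {1..K}" by (auto simp: Jc_def Jcset_def)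
  have finJ: "finite J" "finite Jc" using JK JcK finite_subset by blast+
  have SJ: "S = (\<Sum>k\<in>J. mm k) + (\<Sum>k\<in>Jc. mm k)"
    unfolding S using sum.subset_diff[OF JK, of mm] by (simp add: Jc_def Jcset_def J_def add.commute)
  have split: "(\<Sum>k\<in>X. mm k) = (\<Sum>k\<in>{k\<in>X. (a k - b k)^2 \<le> (a k + b k)^2}. (a k - b k)^2)
      + (\<Sum>k\<in>X - {k\<in>X. (a k - b k)^2 \<le> (a k + b k)^2}. (a k + b k)^2)" if "finite X" for X
  proof -
    have "(\<Sum>k\<in>X. mm k) = (\<Sum>k\<in>X - {k\<in>X. (a k - b k)^2 \<le> (a k + b k)^2}. mm k)
        + (\<Sum>k\<in>{k\<in>X. (a k - b k)^2 \<le> (a k + b k)^2}. mm k)"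
      using sum.subset_diff[of "{k\<in>X. (a k - b k)^2 \<le> (a k + b k)^2}" X mm] that by auto
    also have "(\<Sum>k\<in>X - {k\<in>X. (a k - b k)^2 \<le> (a k + b k)^2}. mm k)
       = (\<Sum>k\<in>X - {k\<in>X. (a k - b k)^2 \<le> (a k + b k)^2}. (a k + b k)^2)"
      by (rule sum.cong) (auto simp: mm_def)
    also have "(\<Sum>k\<in>{k\<in>X. (a k - b k)^2 \<le> (a k + b k)^2}. mm k)
       = (\<Sum>k\<in>{k\<in>X. (a k - b k)^2 \<le> (a k + b k)^2}. (a k - b k)^2)"
      by (rule sum.cong) (auto simp: mm_def)
    finally show ?thesis by simp
  qed
  define O1 where "O1 = {k\<in>J. (a k - b k)^2 \<le> (a k + b k)^2}"
  define g where "g k = f (s k)" for k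
  have bJ: "b k = x' \<bullet> g k" if "k \<in> J" for k
    using that by (simp add: b_def g_def J_def Jset_def)
  have "(lambda_minus g O1)^2 * d^2 \<le> (\<Sum>k\<in>O1. (a k - b k)^2)"
  proof -
    have "(\<Sum>k\<in>O1. (a k - b k)^2) = (\<Sum>k\<in>O1. (x \<bullet> g k - x' \<bullet> g k)^2)"
      by (rule sum.cong) (auto simp: O1_def bJ a_def g_def)
    then show ?thesis using j_bound[of g O1 x x'] by (simp add: d_def)
  qed
  moreover have "(lambda_minus g (J - O1))^2 * d^2 \<le> (\<Sum>k\<in>J - O1. (a k + b k)^2)"
  proof -
    have "(\<Sum>k\<in>J - O1. (a k + b k)^2) = (\<Sum>k\<in>J - O1. (x \<bullet> g k - (-x') \<bullet> g k)^2)"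
      by (rule sum.cong) (auto simp: bJ a_def g_def)
    then show ?thesis using j_bound[of g "J - O1" x "-x'"] by (simp add: d_def dpm_neg)
  qed
  ultimately have PJ: "((lambda_minus g O1)^2 + (lambda_minus g (J - O1))^2) * d^2 \<le> (\<Sum>k\<in>J. mm k)"
    using split[OF finJ(1)] unfolding O1_def by (simp add: distrib_right)
  define MJ where "MJ = Min ((\<lambda>\<Omega>. (lambda_minus (\<lambda>k. f (s k)) \<Omega>)^2
                        + (lambda_minus (\<lambda>k. f (s k)) (J - \<Omega>))^2) ` Pow J)"
  have MJle: "MJ \<le> (lambda_minus g O1)^2 + (lambda_minus g (J - O1))^2"
    unfolding MJ_def g_def using finJ(1) by (intro Min_le) (auto simp: O1_def)
  have PJ': "MJ * d^2 \<le> (\<Sum>k\<in>J. mm k)"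
    using PJ MJle by (smt (verit) mult_right_mono zero_le_power2)
  define O2 where "O2 = {k\<in>Jc. (a k - b k)^2 \<le> (a k + b k)^2}"
  have O2K: "O2 \<subseteq> {1..K}" "Jc - O2 \<subseteq> {1..K}" using JcK by (auto simp: O2_def)
  have "1 / (4 * real L) * (Lambda_ss f I K s s' O2)^2 * d^2 \<le> (\<Sum>k\<in>O2. (a k - b k)^2)"
    using jc_bound[OF disj fin size O2K(1) xc yc] by (simp add: d_def a_def b_def)
  moreover have "1 / (4 * real L) * (Lambda_ss f I K s s' (Jc - O2))^2 * d^2 \<le> (\<Sum>k\<in>Jc - O2. (a k + b k)^2)"
    using jc_bound[OF disj fin size O2K(2) xc cone_neg[OF yc]] by (simp add: d_def a_def b_def dpm_neg)
  ultimately have PJc: "1 / (4 * real L) * ((Lambda_ss f I K s s' O2)^2 + (Lambda_ss f I K s s' (Jc - O2))^2) * d^2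
       \<le> (\<Sum>k\<in>Jc. mm k)"
    using split[OF finJ(2)] unfolding O2_def by (simp add: distrib_right distrib_left)
  define MJc where "MJc = Min ((\<lambda>\<Omega>. (Lambda_ss f I K s s' \<Omega>)^2 + (Lambda_ss f I K s s' (Jc - \<Omega>))^2) ` Pow Jc)"
  have MJcle: "MJc \<le> (Lambda_ss f I K s s' O2)^2 + (Lambda_ss f I K s s' (Jc - O2))^2"
    unfolding MJc_def using finJ(2) by (intro Min_le) (auto simp: O2_def)
  have PJc': "1 / (4 * real L) * MJc * d^2 \<le> (\<Sum>k\<in>Jc. mm k)"
  proof -
    have "1 / (4 * real L) * MJc * d^2
       \<le> 1 / (4 * real L) * ((Lambda_ss f I K s s' O2)^2 + (Lambda_ss f I K s s' (Jc - O2))^2) * d^2"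
      using MJcle by (intro mult_right_mono mult_left_mono) auto
    then show ?thesis using PJc by linarith
  qed
  define X where "X = MJ + 1 / (4 * real L) * MJc"
  have AX: "A_bound f I K L s s' = sqrt X"
    by (simp add: A_bound_def X_def MJ_def MJc_def J_def Jc_def Let_def)
  have X0: "0 \<le> X" using A0[of s s'] AX by simp
  have "X * d^2 \<le> S" using PJ' PJc' SJ by (simp add: X_def distrib_right)
  then have "(sqrt X * d)^2 \<le> S" using X0 by (simp add: power_mult_distrib)
  then have "sqrt X * d \<le> sqrt S" using X0 d0 real_le_rsqrt by blast
  then have main: "d * A_bound f I K L s s' \<le> pool_dist f I K x x'"
    by (simp add: AX pool_dist_def S_def mult.commute)
  have bdd1: "bdd_below ((\<lambda>s'. A_bound f I K L s0 s') ` range sw)" for s0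
    using A0 by (auto simp: bdd_below_def)
  have inner0: "0 \<le> (INF s'\<in>range sw. A_bound f I K L s0 s')" for s0
    by (rule cINF_greatest) (auto simp: A0)
  have bdd2: "bdd_below ((\<lambda>s0. INF s'\<in>range sw. A_bound f I K L s0 s') ` range sw)"
    using inner0 by (auto simp: bdd_below_def)
  have "(INF s\<in>range sw. INF s'\<in>range sw. A_bound f I K L s s')
      \<le> (INF s'\<in>range sw. A_bound f I K L s s')"
    by (rule cINF_lower[OF bdd2]) (simp add: s_def)
  also have "\<dots> \<le> A_bound f I K L s s'"
    by (rule cINF_lower[OF bdd1]) (simp add: s'_def)
  finally have "d * (INF s\<in>range sw. INF s'\<in>range sw. A_bound f I K L s s') \<le> d * A_bound f I K L s s'"
    using d0 by (rule mult_left_mono)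
  then show "dpm x x' * (INF s\<in>range sw. INF s'\<in>range sw. A_bound f I K L s s') \<le> pool_dist f I K x x'"
    using main by (simp add: d_def)
qed


end
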